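(* For any $n\in\mathbb{N}$ there exist two functions $g^n$ and $h^n$ with $\lim_{x\to\infty}g^n(x)=0$ and $\lim_{x\to\infty}h^n(x)=1$, independent of the choice of $z$, $\pi$ and $\rho$, such that for every $z=\{z_0,\dots,z_n\}$ with pairwise distinct coordinates, $\alpha=\min_{i\ne j}|z_i-z_j|$, and every $\rho>0$: (i) $\mathbb{E}_0[\mathcal{T}_0-t^+_0]\le g^n(\alpha\rho)$; (ii) for all $k>0$ and all $\pi\in\mathcal{P}^k_z$, $\mathbb{P}_\pi[T_{\pi,0}<T_\pi]\ge h^n(\alpha\rho)$.
   Context: $\mathcal{P}_z$ is the set of partitions of $z$; $\mathcal{P}^k_z$ those with $n+1-k$ blocks; $\pi_0$ is the partition into singletons. The ARG $\Gamma^{\rho,z}$ is the continuous-time Markov chain on $\mathcal{P}_z$ in which each pair of blocks merges at rate $1$ and each block $\{z_{i_1}<\dots<z_{i_k}\}$ splits into $\{z_{i_1},\dots,z_{i_j}\}$ and $\{z_{i_{j+1}},\dots,z_{i_k}\}$ at rate $\rho(z_{i_{j+1}}-z_{i_j})$. $\mathbb{P}_0,\mathbb{E}_0$ (resp. $\mathbb{P}_\pi$) refer to the chain started at $\pi_0$ (resp. $\pi$). $t_0^+=\inf\{t>0:\Gamma^{\rho,z}_t\ne\pi_0\}$, $\mathcal{T}_0=\inf\{t>t_0^+:\Gamma^{\rho,z}_t=\pi_0\}$; $t_\pi^+=\inf\{t>0:\Gamma^{\rho,z}_t\ne\pi\}$, $T_\pi=\inf\{t>t_\pi^+:\Gamma^{\rho,z}_t=\pi\}$,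 $T_{\pi,0}=\inf\{t>t_\pi^+:\Gamma^{\rho,z}_t=\pi_0\}$. *)

theory Defs
  imports Complex_Main "HOL-Library.Disjoint_Sets" "HOL-Library.Extended_Nonnegative_Real"
begin

text \<open>The continuous-time chain is described by its jump rates; expectations and probabilities
  of the quantities in the paper are expressed through the embedded jump chain
  (holding time in state P is exponential with mean 1 / total rate).\<close>

definition ARG_states :: "real set \<Rightarrow> real set set set" where
  "ARG_states Z = {P. partition_on Z P}"

definition pi0 :: "real set \<Rightarrow> real set set" where
  "pi0 Z = (\<lambda>x. {x}) ` Z"

text \<open>Sum of the rates (each equal to 1) of all pair-mergers leading from P to P'.\<close>
definition merge_rate :: "real set set \<Rightarrow> real set set \<Rightarrow> real" where
  "merge_rate P P' = real (card {S. S \<subseteq> P \<and> card S = 2 \<and> P' = (P - S) \<union> {\<Union>S}})"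

definition split_rate :: "real \<Rightarrow> real set set \<Rightarrow> real set set \<Rightarrow> real" where
  "split_rate \<rho> P P' =
     (\<Sum>(B, a, b) \<in> {(B, a, b). B \<in> P \<and> a \<in> B \<and> b \<in> B \<and> a < b \<and>
                         \<not> (\<exists>c\<in>B. a < c \<and> c < b) \<and>
                         P' = (P - {B}) \<union> {{x\<in>B. x \<le> a}, {x\<in>B. b \<le> x}}}.
        \<rho> * (b - a))"

definition ARG_rate :: "real \<Rightarrow> real set set \<Rightarrow> real set set \<Rightarrow> real" where
  "ARG_rate \<rho> P P' = (if P' = P then 0 else merge_rate P P' + split_rate \<rho> P P')"

definition total_rate :: "real set \<Rightarrow> real \<Rightarrow> real set set \<Rightarrow> real" where
  "total_rate Z \<rho> P = (\<Sum>P'\<in>ARG_states Z. ARG_rate \<rho> P P')"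

definition jump_prob :: "real set \<Rightarrow> real \<Rightarrow> real set set \<Rightarrow> real set set \<Rightarrow> real" where
  "jump_prob Z \<rho> P P' = ARG_rate \<rho> P P' / total_rate Z \<rho> P"

fun path_prob :: "real set \<Rightarrow> real \<Rightarrow> real set set \<Rightarrow> real set set list \<Rightarrow> real" where
  "path_prob Z \<rho> P [] = 1"
| "path_prob Z \<rho> P (x # xs) = jump_prob Z \<rho> P x * path_prob Z \<rho> x xs"

text \<open>E_0[T_0 - t_0^+]: sum over all excursions x_1 ... x_m of the jump chain from pi0 that
  return to pi0 for the first time at step m, of the probability of the excursion times the
  expected total holding time in x_1, ..., x_(m-1).\<close>
definition return_time_exp :: "real set \<Rightarrow> real \<Rightarrow> ennreal" where
  "return_time_exp Z \<rho> =
     (\<Sum>m. \<Sum>xs \<in> {xs. length xs = Suc m \<and> set xs \<subseteq> ARG_states Z \<and> last xs = pi0 Z \<and>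
                        pi0 Z \<notin> set (butlast xs)}.
        ennreal (path_prob Z \<rho> (pi0 Z) xs * (\<Sum>x\<leftarrow>butlast xs. 1 / total_rate Z \<rho> x)))"

text \<open>P_P[T_{P,0} < T_P]: probability that the chain started at P hits pi0 before
  returning to P.\<close>
definition escape_prob :: "real set \<Rightarrow> real \<Rightarrow> real set set \<Rightarrow> ennreal" where
  "escape_prob Z \<rho> P =
     (\<Sum>m. \<Sum>xs \<in> {xs. length xs = Suc m \<and> set xs \<subseteq> ARG_states Z \<and> last xs = pi0 Z \<and>
                        pi0 Z \<notin> set (butlast xs) \<and> P \<notin> set xs}.
        ennreal (path_prob Z \<rho> P xs))"

end

theory Submission
  imports Defs
begin


fun pp :: "('s \<Rightarrow> 's \<Rightarrow> real) \<Rightarrow> 's \<Rightarrow> 's list \<Rightarrow> real" where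
  "pp J x [] = 1"
| "pp J x (y # ys) = J x y * pp J y ys"

definition Aset :: "'s set \<Rightarrow> 's \<Rightarrow> nat \<Rightarrow> 's list set" where
  "Aset St t m = {xs. length xs = Suc m \<and> set xs \<subseteq> St \<and> last xs = t \<and> t \<notin> set (butlast xs)}"

lemma pp_nonneg: "(\<And>x y. J x y \<ge> 0) \<Longrightarrow> pp J x xs \<ge> 0"
  by (induction xs arbitrary: x) auto

lemma finite_lists_St: "finite St \<Longrightarrow> finite {xs. length xs = k \<and> set xs \<subseteq> St}"
  using finite_lists_length_eq[of St k] by (simp add: conj_commute)

lemma Aset_finite: "finite St \<Longrightarrow> finite (Aset St t m)"
  unfolding Aset_def by (rule finite_subset[OF _ finite_lists_St[of St "Suc m"]]) auto

lemma Aset_0: "t \<in> St \<Longrightarrow> Aset St t 0 = {[t]}"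
  unfolding Aset_def by (auto simp: length_Suc_conv)

lemma Aset_Suc: "Aset St t (Suc m) = (\<lambda>(y, ys). y # ys) ` ((St - {t}) \<times> Aset St t m)"
proof -
  have "xs \<in> (\<lambda>(y, ys). y # ys) ` ((St - {t}) \<times> Aset St t m)" if "xs \<in> Aset St t (Suc m)" for xs
  proof -
    from that obtain y ys where xs: "xs = y # ys" and l: "length ys = Suc m"
      unfolding Aset_def by (auto simp: length_Suc_conv)
    then have ne: "ys \<noteq> []" by auto
    have A: "length xs = Suc (Suc m)" "set xs \<subseteq> St" "last xs = t" "t \<notin> set (butlast xs)"
      using that unfolding Aset_def by auto
    have "y \<in> St - {t}" using A ne unfolding xs by auto
    moreover have "ys \<in> Aset St t m" using A ne unfolding xs Aset_def by auto
    ultimately show ?thesis unfolding xs by (intro image_eqI[where x="(y, ys)"]) auto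
  qed
  moreover have "(\<lambda>(y, ys). y # ys) ` ((St - {t}) \<times> Aset St t m) \<subseteq> Aset St t (Suc m)"
  proof
    fix xs assume "xs \<in> (\<lambda>(y, ys). y # ys) ` ((St - {t}) \<times> Aset St t m)"
    then obtain y ys where "xs = y # ys" "y \<in> St - {t}" "ys \<in> Aset St t m" by auto
    moreover then have "ys \<noteq> []" unfolding Aset_def by auto
    ultimately show "xs \<in> Aset St t (Suc m)" unfolding Aset_def by auto
  qed
  ultimately show ?thesis by blast
qed

lemma sum_Aset_Suc:
  assumes "finite St"
  shows "(\<Sum>xs\<in>Aset St t (Suc m). f xs) = (\<Sum>y\<in>St - {t}. \<Sum>ys\<in>Aset St t m. f (y # ys))"
proof -
  have inj: "inj_on (\<lambda>(y, ys). y # ys) ((St - {t}) \<times> Aset St t m)"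
    by (auto simp: inj_on_def)
  have "(\<Sum>xs\<in>Aset St t (Suc m). f xs) = (\<Sum>p\<in>(St - {t}) \<times> Aset St t m. f (fst p # snd p))"
    unfolding Aset_Suc by (subst sum.reindex[OF inj]) (auto intro!: sum.cong)
  also have "\<dots> = (\<Sum>y\<in>St - {t}. \<Sum>ys\<in>Aset St t m. f (y # ys))"
    by (simp add: sum.cartesian_product case_prod_beta)
  finally show ?thesis .
qed

locale chain =
  fixes St :: "'s set" and J :: "'s \<Rightarrow> 's \<Rightarrow> real" and t :: 's
  assumes fin: "finite St" and t: "t \<in> St"
    and Jnn: "\<And>x y. J x y \<ge> 0" and Jsum: "\<And>x. x \<in> St \<Longrightarrow> (\<Sum>y\<in>St. J x y) \<le> 1"
begin

definition Pm :: "nat \<Rightarrow> 's \<Rightarrow> real" where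
  "Pm m x = (\<Sum>xs\<in>Aset St t m. pp J x xs)"

lemma Pm_0: "Pm 0 x = J x t"
  unfolding Pm_def using t by (simp add: Aset_0)

lemma Pm_Suc: "Pm (Suc m) x = (\<Sum>y\<in>St - {t}. J x y * Pm m y)"
  unfolding Pm_def using fin by (simp add: sum_Aset_Suc sum_distrib_left)

lemma Pm_nonneg: "Pm m x \<ge> 0"
  unfolding Pm_def by (intro sum_nonneg pp_nonneg Jnn)

lemma Pm_le1: "x \<in> St \<Longrightarrow> (\<Sum>m<K. Pm m x) \<le> 1"
proof (induction K arbitrary: x)
  case 0 then show ?case by simp
next
  case (Suc K)
  have "(\<Sum>m<Suc K. Pm m x) = Pm 0 x + (\<Sum>m<K. Pm (Suc m) x)"
    by (rule sum.lessThan_Suc_shift)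
  also have "\<dots> = J x t + (\<Sum>y\<in>St - {t}. J x y * (\<Sum>m<K. Pm m y))"
    unfolding Pm_0 Pm_Suc sum_distrib_left by (subst sum.swap) (rule refl)
  also have "\<dots> \<le> J x t + (\<Sum>y\<in>St - {t}. J x y)"
    by (intro add_left_mono sum_mono mult_left_le Suc.IH Jnn) auto
  also have "\<dots> = (\<Sum>y\<in>St. J x y)"
    using fin t by (simp add: sum.remove)
  also have "\<dots> \<le> 1" using Jsum Suc.prems .
  finally show ?case .
qed

context
  fixes c :: "'s \<Rightarrow> real"
  assumes cnn: "\<And>x. c x \<ge> 0"
begin

definition Rm :: "nat \<Rightarrow> 's \<Rightarrow> real" where
  "Rm m x = (\<Sum>xs\<in>Aset St t m. pp J x xs * (\<Sum>y\<leftarrow>butlast xs. c y))"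

definition Tm :: "nat \<Rightarrow> 's \<Rightarrow> real" where
  "Tm m x = (\<Sum>xs\<in>Aset St t m. pp J x xs * (c x + (\<Sum>y\<leftarrow>butlast xs. c y)))"

lemma Rm_0: "Rm 0 x = 0"
  unfolding Rm_def using t by (simp add: Aset_0)

lemma Tm_eq: "Tm m x = c x * Pm m x + Rm m x"
  unfolding Tm_def Pm_def Rm_def by (simp add: sum_distrib_left sum.distrib algebra_simps)

lemma Rm_Suc: "Rm (Suc m) x = (\<Sum>y\<in>St - {t}. J x y * Tm m y)"
proof -
  have ne: "ys \<in> Aset St t m \<Longrightarrow> ys \<noteq> []" for ys unfolding Aset_def by auto
  show ?thesis
    unfolding Rm_def Tm_def using fin
    by (simp add: sum_Aset_Suc sum_distrib_left ne mult.assoc cong: sum.cong)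
qed

lemma Rm_Suc_sum: "(\<Sum>m<K. Rm (Suc m) x) = (\<Sum>y\<in>St - {t}. J x y * (\<Sum>m<K. Tm m y))"
  unfolding Rm_Suc sum_distrib_left by (rule sum.swap)

lemma Tm_bound:
  assumes Vnn: "\<And>x. x \<in> St - {t} \<Longrightarrow> V x \<ge> 0"
    and drift: "\<And>x. x \<in> St - {t} \<Longrightarrow> c x + (\<Sum>y\<in>St - {t}. J x y * V y) \<le> V x"
  shows "x \<in> St - {t} \<Longrightarrow> (\<Sum>m<K. Tm m x) \<le> V x"
proof (induction K arbitrary: x)
  case 0 then show ?case using Vnn by simp
next
  case (Suc K)
  have "(\<Sum>m<Suc K. Tm m x) = c x * (\<Sum>m<Suc K. Pm m x) + (Rm 0 x + (\<Sum>m<K. Rm (Suc m) x))"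
    unfolding Tm_eq sum.distrib sum_distrib_left[symmetric] by (simp only: sum.lessThan_Suc_shift[of "\<lambda>m. Rm m x"])
  also have "\<dots> = c x * (\<Sum>m<Suc K. Pm m x) + (\<Sum>y\<in>St - {t}. J x y * (\<Sum>m<K. Tm m y))"
    by (simp add: Rm_0 Rm_Suc_sum del: sum.lessThan_Suc)
  also have "\<dots> \<le> c x * 1 + (\<Sum>y\<in>St - {t}. J x y * V y)"
  proof (rule add_mono)
    show "c x * (\<Sum>m<Suc K. Pm m x) \<le> c x * 1"
      using Suc.prems by (intro mult_left_mono[OF Pm_le1 cnn]) auto
    show "(\<Sum>y\<in>St - {t}. J x y * (\<Sum>m<K. Tm m y)) \<le> (\<Sum>y\<in>St - {t}. J x y * V y)"
      by (rule sum_mono, rule mult_left_mono[OF Suc.IH Jnn])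
  qed
  also have "\<dots> \<le> V x" using drift Suc.prems by simp
  finally show ?case .
qed

lemma Rm_bound:
  assumes Vnn: "\<And>x. x \<in> St - {t} \<Longrightarrow> V x \<ge> 0"
    and drift: "\<And>x. x \<in> St - {t} \<Longrightarrow> c x + (\<Sum>y\<in>St - {t}. J x y * V y) \<le> V x"
  shows "(\<Sum>m<K. Rm m t) \<le> (\<Sum>y\<in>St - {t}. J t y * V y)"
proof -
  have "(\<Sum>m<K. Rm m t) \<le> (\<Sum>m<Suc K. Rm m t)"
  proof -
    have "Rm K t \<ge> 0" unfolding Rm_def
      using pp_nonneg[OF Jnn] cnn by (intro sum_nonneg mult_nonneg_nonneg sum_list_nonneg) auto
    then show ?thesis by simp
  qed
  also have "\<dots> = (\<Sum>y\<in>St - {t}. J t y * (\<Sum>m<K. Tm m y))"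
    unfolding sum.lessThan_Suc_shift[of "\<lambda>m. Rm m t"] Rm_0 Rm_Suc_sum by simp
  also have "\<dots> \<le> (\<Sum>y\<in>St - {t}. J t y * V y)"
    by (rule sum_mono, rule mult_left_mono[OF Tm_bound[OF Vnn drift] Jnn])
  finally show ?thesis .
qed

lemma return_bound:
  assumes Vnn: "\<And>x. x \<in> St - {t} \<Longrightarrow> V x \<ge> 0"
    and drift: "\<And>x. x \<in> St - {t} \<Longrightarrow> c x + (\<Sum>y\<in>St - {t}. J x y * V y) \<le> V x"
  shows "(\<Sum>m. \<Sum>xs\<in>Aset St t m. ennreal (pp J t xs * (\<Sum>y\<leftarrow>butlast xs. c y)))
         \<le> ennreal (\<Sum>y\<in>St - {t}. J t y * V y)"
proof -
  have nn: "pp J t xs * (\<Sum>y\<leftarrow>butlast xs. c y) \<ge> 0" for xs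
    using pp_nonneg[OF Jnn] cnn by (intro mult_nonneg_nonneg sum_list_nonneg) auto
  have eq: "(\<Sum>xs\<in>Aset St t m. ennreal (pp J t xs * (\<Sum>y\<leftarrow>butlast xs. c y))) = ennreal (Rm m t)" for m
    unfolding Rm_def using nn by (simp add: sum_ennreal)
  have Rnn: "Rm m t \<ge> 0" for m unfolding Rm_def using nn by (intro sum_nonneg) auto
  show ?thesis
    unfolding eq suminf_eq_SUP
  proof (rule SUP_least)
    fix K
    have "(\<Sum>m<K. ennreal (Rm m t)) = ennreal (\<Sum>m<K. Rm m t)" using Rnn by (simp add: sum_ennreal)
    also have "\<dots> \<le> ennreal (\<Sum>y\<in>St - {t}. J t y * V y)"
      by (intro ennreal_leI Rm_bound[OF Vnn drift])
    finally show "(\<Sum>m<K. ennreal (Rm m t)) \<le> ennreal (\<Sum>y\<in>St - {t}. J t y * V y)" .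
  qed
qed

end
end


fun up :: "'s set \<Rightarrow> ('s \<Rightarrow> nat) \<Rightarrow> 's \<Rightarrow> 's list \<Rightarrow> bool" where
  "up St cd x [] = True"
| "up St cd x (y # ys) = (y \<in> St \<and> cd y = Suc (cd x) \<and> up St cd y ys)"

definition Dset :: "'s set \<Rightarrow> ('s \<Rightarrow> nat) \<Rightarrow> nat \<Rightarrow> 's \<Rightarrow> 's list set" where
  "Dset St cd k x = {xs. length xs = k \<and> up St cd x xs}"

lemma up_set: "up St cd x xs \<Longrightarrow> y \<in> set xs \<Longrightarrow> y \<in> St \<and> cd x < cd y"
proof (induction xs arbitrary: x)
  case Nil then show ?case by simp
next
  case (Cons w ws)
  then show ?case by (cases "y = w") (auto dest: Cons.IH)
qed

lemma up_last: "up St cd x xs \<Longrightarrow> xs \<noteq> [] \<Longrightarrow> cd x + length xs \<le> cd (last xs)"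
proof (induction xs arbitrary: x)
  case Nil then show ?case by simp
next
  case (Cons y ys)
  show ?case
  proof (cases "ys = []")
    case True then show ?thesis using Cons.prems by simp
  next
    case False
    have u: "up St cd y ys" "cd y = Suc (cd x)" using Cons.prems by auto
    have "cd y + length ys \<le> cd (last ys)" using Cons.IH[OF u(1) False] .
    then show ?thesis using u False by simp
  qed
qed

lemma up_butlast: "up St cd x xs \<Longrightarrow> y \<in> set (butlast xs) \<Longrightarrow> cd y < cd (last xs)"
proof (induction xs arbitrary: x)
  case Nil then show ?case by simp
next
  case (Cons w ws)
  show ?case
  proof (cases "ws = []")
    case True then show ?thesis using Cons.prems by simp
  next
    case False
    have "cd w + length ws \<le> cd (last ws)" using up_last[of St cd w ws] Cons.prems False by simp
    moreover have "length ws \<ge> 1" using False by (cases ws) auto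
    ultimately have "cd w < cd (last ws)" by linarith
    then show ?thesis using Cons False by auto
  qed
qed

lemma Dset_finite: "finite St \<Longrightarrow> finite (Dset St cd k x)"
  unfolding Dset_def
  by (rule finite_subset[OF _ finite_lists_St[of St k]]) (auto dest: up_set)

lemma Dset_0: "Dset St cd 0 x = {[]}"
  unfolding Dset_def by auto

lemma Dset_Suc: "Dset St cd (Suc k) x =
  (\<lambda>(y, ys). y # ys) ` (SIGMA y:{y\<in>St. cd y = Suc (cd x)}. Dset St cd k y)"
proof -
  have "xs \<in> (\<lambda>(y, ys). y # ys) ` (SIGMA y:{y\<in>St. cd y = Suc (cd x)}. Dset St cd k y)"
    if "xs \<in> Dset St cd (Suc k) x" for xs
  proof -
    from that obtain y ys where xs: "xs = y # ys" and l: "length ys = k"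
      unfolding Dset_def by (auto simp: length_Suc_conv)
    have "up St cd x xs" using that unfolding Dset_def by simp
    then have "y \<in> St" "cd y = Suc (cd x)" "up St cd y ys" unfolding xs by auto
    then show ?thesis unfolding xs using l by (intro image_eqI[where x="(y, ys)"]) (auto simp: Dset_def)
  qed
  moreover have "(\<lambda>(y, ys). y # ys) ` (SIGMA y:{y\<in>St. cd y = Suc (cd x)}. Dset St cd k y) \<subseteq> Dset St cd (Suc k) x"
    by (auto simp: Dset_def)
  ultimately show ?thesis by blast
qed

lemma sum_Dset_Suc:
  assumes "finite St"
  shows "(\<Sum>xs\<in>Dset St cd (Suc k) x. f xs) = (\<Sum>y\<in>{y\<in>St. cd y = Suc (cd x)}. \<Sum>ys\<in>Dset St cd k y. f (y # ys))"
proof -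
  have inj: "inj_on (\<lambda>(y, ys). y # ys) (SIGMA y:{y\<in>St. cd y = Suc (cd x)}. Dset St cd k y)"
    by (auto simp: inj_on_def)
  have "(\<Sum>xs\<in>Dset St cd (Suc k) x. f xs) = (\<Sum>p\<in>(SIGMA y:{y\<in>St. cd y = Suc (cd x)}. Dset St cd k y). f (fst p # snd p))"
    unfolding Dset_Suc by (subst sum.reindex[OF inj]) (auto intro!: sum.cong)
  also have "\<dots> = (\<Sum>y\<in>{y\<in>St. cd y = Suc (cd x)}. \<Sum>ys\<in>Dset St cd k y. f (y # ys))"
    using assms Dset_finite[OF assms] by (subst sum.Sigma) (auto simp: case_prod_beta)
  finally show ?thesis .
qed

lemma up_lower:
  assumes fin: "finite St" and Jnn: "\<And>x y. J x y \<ge> 0" and p: "p \<ge> 0"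
    and step: "\<And>x. x \<in> St \<Longrightarrow> cd x < N \<Longrightarrow> p \<le> (\<Sum>y\<in>{y\<in>St. cd y = Suc (cd x)}. J x y)"
  shows "x \<in> St \<Longrightarrow> cd x + k \<le> N \<Longrightarrow> p ^ k \<le> (\<Sum>xs\<in>Dset St cd k x. pp J x xs)"
proof (induction k arbitrary: x)
  case 0 then show ?case by (simp add: Dset_0)
next
  case (Suc k)
  have "p ^ Suc k = p ^ k * p" by simp
  also have "\<dots> \<le> p ^ k * (\<Sum>y\<in>{y\<in>St. cd y = Suc (cd x)}. J x y)"
    using step[of x] Suc.prems p by (intro mult_left_mono) auto
  also have "\<dots> = (\<Sum>y\<in>{y\<in>St. cd y = Suc (cd x)}. J x y * p ^ k)"
    by (simp add: sum_distrib_left mult.commute)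
  also have "\<dots> \<le> (\<Sum>y\<in>{y\<in>St. cd y = Suc (cd x)}. J x y * (\<Sum>ys\<in>Dset St cd k y. pp J y ys))"
  proof (rule sum_mono)
    fix y assume "y \<in> {y\<in>St. cd y = Suc (cd x)}"
    then have "p ^ k \<le> (\<Sum>ys\<in>Dset St cd k y. pp J y ys)" using Suc.prems by (intro Suc.IH) auto
    then show "J x y * p ^ k \<le> J x y * (\<Sum>ys\<in>Dset St cd k y. pp J y ys)"
      by (rule mult_left_mono[OF _ Jnn])
  qed
  also have "\<dots> = (\<Sum>xs\<in>Dset St cd (Suc k) x. pp J x xs)"
    by (simp add: sum_Dset_Suc[OF fin] sum_distrib_left)
  finally show ?case .
qed



context
  fixes Z :: "real set"
  assumes finZ: "finite Z"
begin

lemma st_sub: "P \<in> ARG_states Z \<Longrightarrow> P \<subseteq> Pow Z"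
  unfolding ARG_states_def partition_on_def by auto

lemma st_fin: "P \<in> ARG_states Z \<Longrightarrow> finite P"
  using st_sub finZ by (meson finite_Pow_iff finite_subset)

lemma st_subPow: "ARG_states Z \<subseteq> Pow (Pow Z)"
  by (intro subsetI PowI st_sub)

lemma st_finite: "finite (ARG_states Z)"
  using finZ by (intro finite_subset[OF st_subPow]) simp

lemma st_card: "card (ARG_states Z) \<le> 2 ^ (2 ^ card Z)"
proof -
  have "card (ARG_states Z) \<le> card (Pow (Pow Z))"
    using finZ by (intro card_mono st_subPow) simp
  also have "\<dots> = 2 ^ (2 ^ card Z)" using finZ by (simp add: card_Pow)
  finally show ?thesis .
qed

lemma st_block: "P \<in> ARG_states Z \<Longrightarrow> B \<in> P \<Longrightarrow> B \<subseteq> Z \<and> B \<noteq> {} \<and> finite B"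
  unfolding ARG_states_def partition_on_def using finZ by (auto intro: finite_subset)

lemma st_disj: "P \<in> ARG_states Z \<Longrightarrow> B \<in> P \<Longrightarrow> C \<in> P \<Longrightarrow> B \<noteq> C \<Longrightarrow> B \<inter> C = {}"
  unfolding ARG_states_def partition_on_def disjoint_def by auto

lemma st_cover: "P \<in> ARG_states Z \<Longrightarrow> x \<in> Z \<Longrightarrow> \<exists>B\<in>P. x \<in> B"
  unfolding ARG_states_def partition_on_def by auto

lemma pi0_st: "pi0 Z \<in> ARG_states Z"
  unfolding ARG_states_def pi0_def by (simp add: partition_on_singletons)

lemma card_pi0: "card (pi0 Z) = card Z"
  unfolding pi0_def by (rule card_image) (auto simp: inj_on_def)

lemma st_nonsingleton:
  assumes P: "P \<in> ARG_states Z" and ne: "P \<noteq> pi0 Z"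
  shows "\<exists>B\<in>P. \<exists>a\<in>B. \<exists>b\<in>B. a < b"
proof (rule ccontr)
  assume "\<not> ?thesis"
  then have nl: "\<And>B a b. B \<in> P \<Longrightarrow> a \<in> B \<Longrightarrow> b \<in> B \<Longrightarrow> \<not> a < b"
    by auto
  have sing: "\<And>B a b. B \<in> P \<Longrightarrow> a \<in> B \<Longrightarrow> b \<in> B \<Longrightarrow> a = b"
  proof -
    fix B a b assume "B \<in> P" "a \<in> B" "b \<in> B"
    then have "\<not> a < b" "\<not> b < a" using nl by auto
    then show "a = b" by linarith
  qed
  have "P = pi0 Z"
  proof
    show "P \<subseteq> pi0 Z"
    proof
      fix B assume B: "B \<in> P"
      then obtain a where a: "a \<in> B" using st_block[OF P B] by auto
      then have "B = {a}" using sing[OF B] by auto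
      moreover have "a \<in> Z" using st_block[OF P B] a by auto
      ultimately show "B \<in> pi0 Z" unfolding pi0_def by auto
    qed
  next
    show "pi0 Z \<subseteq> P"
    proof
      fix B assume "B \<in> pi0 Z"
      then obtain x where x: "x \<in> Z" "B = {x}" unfolding pi0_def by auto
      then obtain C where C: "C \<in> P" "x \<in> C" using st_cover[OF P] by auto
      then have "C = {x}" using sing[OF C(1)] by auto
      then show "B \<in> P" using C x by simp
    qed
  qed
  then show False using ne by simp
qed

lemma st_sum_card: "P \<in> ARG_states Z \<Longrightarrow> card Z = (\<Sum>B\<in>P. card B)"
proof -
  assume P: "P \<in> ARG_states Z"
  have "Z = \<Union>P" using P unfolding ARG_states_def partition_on_def by auto
  moreover have "card (\<Union>P) = (\<Sum>B\<in>P. card B)"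
    using P st_block[OF P] unfolding ARG_states_def partition_on_def by (intro card_Union_disjoint) auto
  ultimately show ?thesis by simp
qed

lemma st_card_le: "P \<in> ARG_states Z \<Longrightarrow> card P \<le> card Z"
proof -
  assume P: "P \<in> ARG_states Z"
  have "card P = (\<Sum>B\<in>P. 1)" by simp
  also have "\<dots> \<le> (\<Sum>B\<in>P. card B)"
  proof (rule sum_mono)
    fix B assume "B \<in> P"
    then show "1 \<le> card B" using st_block[OF P] by (simp add: Suc_le_eq card_gt_0_iff)
  qed
  finally show ?thesis using st_sum_card[OF P] by simp
qed

lemma st_card_less: "P \<in> ARG_states Z \<Longrightarrow> P \<noteq> pi0 Z \<Longrightarrow> card P < card Z"
proof -
  assume P: "P \<in> ARG_states Z" and ne: "P \<noteq> pi0 Z"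
  obtain B a b where B: "B \<in> P" "a \<in> B" "b \<in> B" "a < b" using st_nonsingleton[OF P ne] by auto
  have "card P = (\<Sum>B\<in>P. 1)" by simp
  also have "\<dots> < (\<Sum>B\<in>P. card B)"
  proof (rule sum_strict_mono_ex1)
    show "finite P" using st_fin[OF P] .
    show "\<forall>B\<in>P. 1 \<le> card B" using st_block[OF P] by (auto simp: Suc_le_eq card_gt_0_iff)
    have "{a, b} \<subseteq> B" using B by auto
    then have "card {a, b} \<le> card B" using st_block[OF P B(1)] by (intro card_mono) auto
    then show "\<exists>B\<in>P. 1 < card B" using B by (intro bexI[of _ B]) auto
  qed
  finally show ?thesis using st_sum_card[OF P] by simp
qed

lemma st_card_eq: "P \<in> ARG_states Z \<Longrightarrow> card P = card Z \<Longrightarrow> P = pi0 Z"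
  using st_card_less by fastforce

lemma split_card:
  assumes P: "P \<in> ARG_states Z" and B: "B \<in> P" and ab: "a \<in> B" "b \<in> B" "a < b"
  shows "card ((P - {B}) \<union> {{x\<in>B. x \<le> a}, {x\<in>B. b \<le> x}}) = card P + 1"
proof -
  let ?B1 = "{x\<in>B. x \<le> a}" and ?B2 = "{x\<in>B. b \<le> x}"
  have n1: "?B1 \<notin> P - {B}"
  proof
    assume "?B1 \<in> P - {B}"
    then have "?B1 \<inter> B = {}" using st_disj[OF P _ B] by auto
    then show False using ab by auto
  qed
  have n2: "?B2 \<notin> P - {B}"
  proof
    assume "?B2 \<in> P - {B}"
    then have "?B2 \<inter> B = {}" using st_disj[OF P _ B] by auto
    then show False using ab by auto
  qed
  have n12: "?B1 \<noteq> ?B2" using ab by auto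
  have eq: "(P - {B}) \<union> {?B1, ?B2} = insert ?B1 (insert ?B2 (P - {B}))" by auto
  have fin: "finite (P - {B})" using st_fin[OF P] by simp
  have n1': "?B1 \<notin> insert ?B2 (P - {B})" using n1 n12 by simp
  have "card (insert ?B1 (insert ?B2 (P - {B}))) = Suc (card (insert ?B2 (P - {B})))"
    using card_insert_disjoint[OF _ n1'] fin by simp
  also have "card (insert ?B2 (P - {B})) = Suc (card (P - {B}))"
    using card_insert_disjoint[OF fin n2] .
  finally have c1: "card (insert ?B1 (insert ?B2 (P - {B}))) = Suc (Suc (card (P - {B})))" .
  have c2: "card (P - {B}) = card P - 1" using B by (rule card_Diff_singleton)
  have "card P \<noteq> 0" using B st_fin[OF P] by auto
  then show ?thesis unfolding eq c1 c2 by simp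
qed

lemma split_set_finite:
  "P \<in> ARG_states Z \<Longrightarrow> finite {(B, a, b). B \<in> P \<and> a \<in> B \<and> b \<in> B \<and> a < b \<and>
                         \<not> (\<exists>c\<in>B. a < c \<and> c < b) \<and>
                         P' = (P - {B}) \<union> {{x\<in>B. x \<le> a}, {x\<in>B. b \<le> x}}}"
  by (rule finite_subset[of _ "P \<times> Z \<times> Z"]) (auto dest: st_block intro: st_fin finZ)

lemma split_rate_nonneg: "\<rho> \<ge> 0 \<Longrightarrow> split_rate \<rho> P P' \<ge> 0"
  unfolding split_rate_def by (intro sum_nonneg) auto

lemma merge_rate_nonneg: "merge_rate P P' \<ge> 0"
  unfolding merge_rate_def by simp

lemma ARG_rate_nonneg: "\<rho> \<ge> 0 \<Longrightarrow> ARG_rate \<rho> P P' \<ge> 0"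
  unfolding ARG_rate_def using split_rate_nonneg merge_rate_nonneg by simp

lemma split_rate_zero:
  assumes P: "P \<in> ARG_states Z" and c: "card P' \<noteq> card P + 1"
  shows "split_rate \<rho> P P' = 0"
proof -
  have e: "{(B, a, b). B \<in> P \<and> a \<in> B \<and> b \<in> B \<and> a < b \<and>
                         \<not> (\<exists>c\<in>B. a < c \<and> c < b) \<and>
                         P' = (P - {B}) \<union> {{x\<in>B. x \<le> a}, {x\<in>B. b \<le> x}}} = {}"
    using split_card[OF P] c by auto
  show ?thesis unfolding split_rate_def e by simp
qed

lemma merge_rate_le: "P \<in> ARG_states Z \<Longrightarrow> merge_rate P P' \<le> 2 ^ card Z"
proof -
  assume P: "P \<in> ARG_states Z"
  have "card {S. S \<subseteq> P \<and> card S = 2 \<and> P' = (P - S) \<union> {\<Union>S}} \<le> card (Pow P)"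
    using st_fin[OF P] by (intro card_mono) (simp, blast)
  also have "\<dots> = 2 ^ card P" using st_fin[OF P] by (simp add: card_Pow)
  also have "\<dots> \<le> 2 ^ card Z" using st_card_le[OF P] by (intro power_increasing) auto
  finally have "card {S. S \<subseteq> P \<and> card S = 2 \<and> P' = (P - S) \<union> {\<Union>S}} \<le> (2::nat) ^ card Z" .
  then have "real (card {S. S \<subseteq> P \<and> card S = 2 \<and> P' = (P - S) \<union> {\<Union>S}}) \<le> real ((2::nat) ^ card Z)"
    by (rule of_nat_mono)
  then show ?thesis unfolding merge_rate_def by simp
qed

lemma rate_other_le:
  assumes P: "P \<in> ARG_states Z" and c: "card P' \<noteq> card P + 1"
  shows "ARG_rate \<rho> P P' \<le> 2 ^ card Z"
  using merge_rate_le[OF P, of P'] split_rate_zero[OF P c, of \<rho>] unfolding ARG_rate_def by simp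

lemma split_exists:
  assumes P: "P \<in> ARG_states Z" and ne: "P \<noteq> pi0 Z" and rho: "\<rho> \<ge> 0"
  shows "\<exists>P'\<in>ARG_states Z. card P' = card P + 1 \<and>
           (\<exists>a\<in>Z. \<exists>b\<in>Z. a < b \<and> \<rho> * (b - a) \<le> split_rate \<rho> P P')"
proof -
  obtain B a1 b1 where B: "B \<in> P" "a1 \<in> B" "b1 \<in> B" "a1 < b1"
    using st_nonsingleton[OF P ne] by auto
  have Bz: "B \<subseteq> Z" "B \<noteq> {}" "finite B" using st_block[OF P B(1)] by auto
  define a where "a = Min B"
  have aB: "a \<in> B" and amin: "\<And>x. x \<in> B \<Longrightarrow> a \<le> x" using Bz unfolding a_def by auto
  have ne2: "B - {a} \<noteq> {}" using B aB by auto
  define b where "b = Min (B - {a})"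
  have bB: "b \<in> B - {a}" unfolding b_def using Bz ne2 by (intro Min_in) auto
  have bmin: "\<And>x. x \<in> B - {a} \<Longrightarrow> b \<le> x" unfolding b_def using Bz by (intro Min_le) auto
  have bmin': "\<And>x. x \<in> B \<Longrightarrow> a < x \<Longrightarrow> b \<le> x" using bmin by auto
  have ab: "a < b" using bB amin[of b] by auto
  have nobetween: "\<not> (\<exists>c\<in>B. a < c \<and> c < b)"
    using bmin' by (meson not_less)
  let ?B1 = "{x\<in>B. x \<le> a}" and ?B2 = "{x\<in>B. b \<le> x}"
  define P' where "P' = (P - {B}) \<union> {?B1, ?B2}"
  have cover: "?B1 \<union> ?B2 = B"
  proof
    show "?B1 \<union> ?B2 \<subseteq> B" by auto
    show "B \<subseteq> ?B1 \<union> ?B2"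
    proof
      fix x assume x: "x \<in> B"
      show "x \<in> ?B1 \<union> ?B2"
      proof (cases "x \<le> a")
        case True then show ?thesis using x by simp
      next
        case False then show ?thesis using x bmin'[of x] by simp
      qed
    qed
  qed
  have P'st: "P' \<in> ARG_states Z"
    unfolding ARG_states_def mem_Collect_eq
  proof (rule partition_onI)
    have "\<Union>P' = \<Union>(P - {B}) \<union> B" unfolding P'_def using cover by auto
    also have "\<dots> = \<Union>P" using B by auto
    also have "\<dots> = Z" using P unfolding ARG_states_def partition_on_def by auto
    finally show "\<Union>P' = Z" .
  next
    show "{} \<notin> P'" unfolding P'_def using P aB bB unfolding ARG_states_def partition_on_def by auto
  next
    fix C D assume C: "C \<in> P'" and D: "D \<in> P'" and CD: "C \<noteq> D"
    have sub: "?B1 \<subseteq> B" "?B2 \<subseteq> B" by auto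
    have d12: "?B1 \<inter> ?B2 = {}" using ab by auto
    show "disjnt C D"
      unfolding disjnt_def
    proof -
      consider "C \<in> P - {B}" "D \<in> P - {B}" | "C \<in> P - {B}" "D \<in> {?B1, ?B2}"
        | "C \<in> {?B1, ?B2}" "D \<in> P - {B}" | "C \<in> {?B1, ?B2}" "D \<in> {?B1, ?B2}"
        using C D unfolding P'_def by blast
      then show "C \<inter> D = {}"
      proof cases
        case 1 then show ?thesis using st_disj[OF P] CD by auto
      next
        case 2
        then have "C \<inter> B = {}" using st_disj[OF P _ B(1)] by auto
        then show ?thesis using 2 sub by auto
      next
        case 3
        then have "D \<inter> B = {}" using st_disj[OF P _ B(1)] by auto
        then show ?thesis using 3 sub by auto
      next
        case 4 then show ?thesis using CD d12 by auto
      qed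
    qed
  qed
  have cardP': "card P' = card P + 1"
    unfolding P'_def using split_card[OF P B(1) aB _ ab] bB by auto
  have "\<rho> * (b - a) \<le> split_rate \<rho> P P'"
    unfolding split_rate_def
  proof -
    let ?I = "{(B, a, b). B \<in> P \<and> a \<in> B \<and> b \<in> B \<and> a < b \<and>
                         \<not> (\<exists>c\<in>B. a < c \<and> c < b) \<and>
                         P' = (P - {B}) \<union> {{x\<in>B. x \<le> a}, {x\<in>B. b \<le> x}}}"
    have mem: "(B, a, b) \<in> ?I" using B(1) aB bB ab nobetween unfolding P'_def by auto
    have "\<rho> * (b - a) = (\<lambda>(B, a, b). \<rho> * (b - a)) (B, a, b)" by simp
    also have "\<dots> \<le> (\<Sum>(B, a, b)\<in>?I. \<rho> * (b - a))"
    proof (rule member_le_sum[OF mem])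
      show "finite ?I" by (rule split_set_finite[OF P])
      fix x assume "x \<in> ?I - {(B, a, b)}"
      then show "0 \<le> (case x of (B, a, b) \<Rightarrow> \<rho> * (b - a))" using rho by (auto split: prod.splits)
    qed
    finally show "\<rho> * (b - a) \<le> (\<Sum>(B, a, b)\<in>?I. \<rho> * (b - a))" .
  qed
  moreover have "a \<in> Z" "b \<in> Z" using aB bB Bz by auto
  ultimately show ?thesis using P'st cardP' ab by (intro bexI[of _ P'] conjI bexI[of _ a] bexI[of _ b]) auto
qed

end



lemma lim_Mx: "((\<lambda>x::real. M / x) \<longlongrightarrow> 0) at_top"
  by (rule tendsto_divide_0[OF tendsto_const filterlim_at_top_imp_at_infinity[OF filterlim_ident]])

lemma lim_g: "((\<lambda>x::real. \<Sum>i<N. (1 + M / x) ^ i / x) \<longlongrightarrow> 0) at_top"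
proof (rule tendsto_null_sum)
  fix i
  have "((\<lambda>x::real. (1 + M / x) ^ i) \<longlongrightarrow> (1 + 0) ^ i) at_top"
    by (intro tendsto_intros lim_Mx)
  then show "((\<lambda>x::real. (1 + M / x) ^ i / x) \<longlongrightarrow> 0) at_top"
    by (rule tendsto_divide_0[OF _ filterlim_at_top_imp_at_infinity[OF filterlim_ident]])
qed

lemma lim_h: "((\<lambda>x::real. (x / (x + M)) ^ n) \<longlongrightarrow> 1) at_top"
proof -
  have "((\<lambda>x::real. (1 / (1 + M / x)) ^ n) \<longlongrightarrow> (1 / (1 + 0)) ^ n) at_top"
    by (intro tendsto_intros lim_Mx) simp
  then have "((\<lambda>x::real. (1 / (1 + M / x)) ^ n) \<longlongrightarrow> 1) at_top" by simp
  moreover have "\<forall>\<^sub>F x in at_top. (1 / (1 + M / x)) ^ n = (x / (x + M)) ^ n"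
    using eventually_gt_at_top[of "0::real"]
    by eventually_elim (simp add: field_simps)
  ultimately show ?thesis by (rule tendsto_cong[THEN iffD1, rotated])
qed



lemma path_prob_pp: "path_prob Z \<rho> P xs = pp (jump_prob Z \<rho>) P xs"
  by (induction xs arbitrary: P) auto

lemma sum_split_pred:
  assumes "finite A"
  shows "(\<Sum>y\<in>A. f y) = (\<Sum>y\<in>{y\<in>A. Q y}. f y) + (\<Sum>y\<in>{y\<in>A. \<not> Q y}. f y)"
proof -
  have "A = {y\<in>A. Q y} \<union> {y\<in>A. \<not> Q y}" by auto
  then have "(\<Sum>y\<in>A. f y) = (\<Sum>y\<in>{y\<in>A. Q y} \<union> {y\<in>A. \<not> Q y}. f y)" by simp
  also have "\<dots> = (\<Sum>y\<in>{y\<in>A. Q y}. f y) + (\<Sum>y\<in>{y\<in>A. \<not> Q y}. f y)"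
    using assms by (intro sum.union_disjoint) auto
  finally show ?thesis .
qed

definition Mbn :: "nat \<Rightarrow> real" where "Mbn n = (2::real) ^ Suc n * 2 ^ (2 ^ Suc n)"

locale argsetup =
  fixes z :: "nat \<Rightarrow> real" and n :: nat and \<rho> :: real
  assumes inj: "inj_on z {0..n}" and rho: "\<rho> > 0"
begin

definition "Z = z ` {0..n}"
definition "\<alpha> = Min {\<bar>z i - z j\<bar> | i j. i \<le> n \<and> j \<le> n \<and> i \<noteq> j}"
definition "St = ARG_states Z"
definition "J = jump_prob Z \<rho>"
definition "Mb = Mbn n"
definition "T P = total_rate Z \<rho> P"
definition "Sp P = (\<Sum>y\<in>{y\<in>St. card y = Suc (card P)}. ARG_rate \<rho> P y)"
definition "Me P = (\<Sum>y\<in>{y\<in>St. card y \<noteq> Suc (card P)}. ARG_rate \<rho> P y)"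

lemma finZ: "finite Z" unfolding Z_def by simp

lemma cardZ: "card Z = Suc n"
  unfolding Z_def using card_image[OF inj] by simp

lemma finSt: "finite St" unfolding St_def using st_finite[OF finZ] .

lemma Dfin: "finite {\<bar>z i - z j\<bar> | i j. i \<le> n \<and> j \<le> n \<and> i \<noteq> j}"
  by (rule finite_subset[of _ "(\<lambda>(i, j). \<bar>z i - z j\<bar>) ` ({..n} \<times> {..n})"]) auto

lemma alpha_le:
  assumes "a \<in> Z" "b \<in> Z" "a < b"
  shows "\<alpha> \<le> b - a" "\<alpha> > 0"
proof -
  obtain i j where ij: "i \<le> n" "j \<le> n" "a = z i" "b = z j" using assms unfolding Z_def by auto
  then have "i \<noteq> j" using assms by auto
  then have mem: "\<bar>z j - z i\<bar> \<in> {\<bar>z i - z j\<bar> | i j. i \<le> n \<and> j \<le> n \<and> i \<noteq> j}" using ij by blast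
  show "\<alpha> \<le> b - a" unfolding \<alpha>_def using Min_le[OF Dfin mem] ij assms by simp
  have pos: "\<forall>d\<in>{\<bar>z i - z j\<bar> | i j. i \<le> n \<and> j \<le> n \<and> i \<noteq> j}. 0 < d"
  proof
    fix d assume "d \<in> {\<bar>z i - z j\<bar> | i j. i \<le> n \<and> j \<le> n \<and> i \<noteq> j}"
    then obtain i j where "d = \<bar>z i - z j\<bar>" "i \<le> n" "j \<le> n" "i \<noteq> j" by blast
    moreover then have "z i \<noteq> z j" using inj unfolding inj_on_def by auto
    ultimately show "0 < d" by simp
  qed
  show "\<alpha> > 0" unfolding \<alpha>_def using Min_gr_iff[OF Dfin] mem pos by blast
qed

lemma rate_nn: "ARG_rate \<rho> P y \<ge> 0" using ARG_rate_nonneg[OF finZ] rho by simp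

lemma T_eq: "T P = Sp P + Me P"
  unfolding T_def total_rate_def Sp_def Me_def St_def[symmetric]
  by (rule sum_split_pred[OF finSt])

lemma Sp_nn: "Sp P \<ge> 0" unfolding Sp_def using rate_nn by (intro sum_nonneg) auto
lemma Me_nn: "Me P \<ge> 0" unfolding Me_def using rate_nn by (intro sum_nonneg) auto

lemma Me_le: "P \<in> St \<Longrightarrow> Me P \<le> Mb"
proof -
  assume P: "P \<in> St"
  have "Me P \<le> (\<Sum>y\<in>{y\<in>St. card y \<noteq> Suc (card P)}. 2 ^ card Z)"
    unfolding Me_def using rate_other_le[OF finZ] P unfolding St_def by (intro sum_mono) auto
  also have "\<dots> \<le> (\<Sum>y\<in>St. 2 ^ card Z)"
    using finSt by (intro sum_mono2) auto
  also have "\<dots> = real (card St) * 2 ^ Suc n" using cardZ by simp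
  also have "\<dots> \<le> 2 ^ (2 ^ Suc n) * 2 ^ Suc n"
  proof (rule mult_right_mono)
    have "card St \<le> 2 ^ (2 ^ Suc n)" using st_card[OF finZ] cardZ unfolding St_def by simp
    then have "real (card St) \<le> real ((2::nat) ^ (2 ^ Suc n))" by (rule of_nat_mono)
    then show "real (card St) \<le> 2 ^ (2 ^ Suc n)" by simp
  qed simp
  finally show ?thesis unfolding Mb_def Mbn_def by (metis mult.commute)
qed

lemma Sp_ge: "P \<in> St \<Longrightarrow> P \<noteq> pi0 Z \<Longrightarrow> \<rho> * \<alpha> \<le> Sp P"
proof -
  assume P: "P \<in> St" and ne: "P \<noteq> pi0 Z"
  have "\<exists>P'\<in>ARG_states Z. card P' = card P + 1 \<and>
           (\<exists>a\<in>Z. \<exists>b\<in>Z. a < b \<and> \<rho> * (b - a) \<le> split_rate \<rho> P P')"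
    using split_exists[OF finZ P[unfolded St_def] ne] rho by simp
  then obtain P' a b where P': "P' \<in> St" "card P' = card P + 1" "a \<in> Z" "b \<in> Z" "a < b"
    "\<rho> * (b - a) \<le> split_rate \<rho> P P'"
    unfolding St_def by blast
  have "\<rho> * \<alpha> \<le> \<rho> * (b - a)" using alpha_le[OF P'(3-5)] rho by simp
  also have "\<dots> \<le> split_rate \<rho> P P'" by fact
  also have "\<dots> \<le> ARG_rate \<rho> P P'"
    unfolding ARG_rate_def using P'(2) merge_rate_nonneg by auto
  also have "\<dots> \<le> Sp P"
    unfolding Sp_def using P' finSt rate_nn by (intro member_le_sum) auto
  finally show ?thesis .
qed

lemma alpha_pos_ne: "P \<in> St \<Longrightarrow> P \<noteq> pi0 Z \<Longrightarrow> \<alpha> > 0"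
proof -
  assume P: "P \<in> St" and ne: "P \<noteq> pi0 Z"
  have "\<exists>P'\<in>ARG_states Z. card P' = card P + 1 \<and>
           (\<exists>a\<in>Z. \<exists>b\<in>Z. a < b \<and> \<rho> * (b - a) \<le> split_rate \<rho> P P')"
    using split_exists[OF finZ P[unfolded St_def] ne] rho by simp
  then obtain a b where "a \<in> Z" "b \<in> Z" "a < b" by blast
  then show ?thesis using alpha_le by auto
qed

lemma T_pos: "P \<in> St \<Longrightarrow> P \<noteq> pi0 Z \<Longrightarrow> T P > 0"
  using Sp_ge[of P] alpha_pos_ne[of P] rho Me_nn[of P] T_eq[of P]
  by (smt (verit) mult_pos_pos)

lemma J_nn: "J P y \<ge> 0"
  unfolding J_def jump_prob_def T_def[symmetric]
  using rate_nn by (simp add: T_eq Sp_nn Me_nn)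

lemma J_sum: "(\<Sum>y\<in>St. J P y) \<le> 1"
proof -
  have "(\<Sum>y\<in>St. J P y) = T P / T P"
    unfolding J_def jump_prob_def T_def total_rate_def St_def by (simp add: sum_divide_distrib[symmetric])
  then show ?thesis by simp
qed

lemma J_split: "P \<in> St \<Longrightarrow> P \<noteq> pi0 Z \<Longrightarrow>
   \<rho> * \<alpha> / (\<rho> * \<alpha> + Mb) \<le> (\<Sum>y\<in>{y\<in>St. card y = Suc (card P)}. J P y)"
proof -
  assume P: "P \<in> St" and ne: "P \<noteq> pi0 Z"
  have s: "(\<Sum>y\<in>{y\<in>St. card y = Suc (card P)}. J P y) = Sp P / T P"
    unfolding J_def jump_prob_def Sp_def T_def by (simp add: sum_divide_distrib)
  have x: "\<rho> * \<alpha> > 0" using alpha_pos_ne[OF P ne] rho by simp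
  have a: "\<rho> * \<alpha> \<le> Sp P" using Sp_ge[OF P ne] .
  have b: "Me P \<le> Mb" using Me_le[OF P] .
  have Mb: "Mb > 0" unfolding Mb_def Mbn_def by simp
  have "\<rho> * \<alpha> / (\<rho> * \<alpha> + Mb) \<le> Sp P / (Sp P + Me P)"
  proof -
    have "\<rho> * \<alpha> * Me P \<le> Sp P * Mb"
      using a b x Me_nn[of P] by (intro mult_mono) auto
    then have "\<rho> * \<alpha> * (Sp P + Me P) \<le> Sp P * (\<rho> * \<alpha> + Mb)" by (simp add: algebra_simps)
    then show ?thesis using x a Mb Me_nn[of P] by (simp add: divide_simps)
  qed
  then show ?thesis using s T_eq by simp
qed


definition "xx = \<rho> * \<alpha>"
definition "q = 1 + Mb / xx"
definition "\<delta> i = q ^ i / xx"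
definition "W c = (\<Sum>i\<in>{c..<Suc n}. \<delta> i)"

lemma Mb_pos: "Mb > 0" unfolding Mb_def Mbn_def by simp

context
  assumes xpos: "xx > 0"
begin

lemma q_ge: "q \<ge> 1" unfolding q_def using Mb_pos xpos by simp

lemma \<delta>_nn: "\<delta> i \<ge> 0" unfolding \<delta>_def using q_ge xpos by simp

lemma W_nn: "W c \<ge> 0" unfolding W_def using \<delta>_nn by (intro sum_nonneg) auto

lemma W_anti: "c1 \<le> c2 \<Longrightarrow> W c2 \<le> W c1"
  unfolding W_def using \<delta>_nn by (intro sum_mono2) auto

lemma W_step: "c < Suc n \<Longrightarrow> W c = \<delta> c + W (Suc c)"
  unfolding W_def by (rule sum.atLeast_Suc_lessThan)

lemma W_0: "c \<le> Suc n \<Longrightarrow> W 0 = (\<Sum>i<c. \<delta> i) + W c"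
  unfolding W_def using sum.atLeastLessThan_concat[of 0 c "Suc n" \<delta>]
  by (simp add: atLeast0LessThan)

lemma geo: "Mb * (\<Sum>i<c. \<delta> i) = q ^ c - 1"
proof -
  have "Mb * (\<Sum>i<c. \<delta> i) = (Mb / xx) * (\<Sum>i<c. q ^ i)"
    unfolding \<delta>_def by (simp add: sum_divide_distrib[symmetric])
  also have "Mb / xx = q - 1" unfolding q_def by simp
  also have "(q - 1) * (\<Sum>i<c. q ^ i) = q ^ c - 1" by (rule power_diff_1_eq[symmetric])
  finally show ?thesis .
qed

lemma drift:
  assumes P: "P \<in> St" and ne: "P \<noteq> pi0 Z"
  shows "1 / T P + (\<Sum>y\<in>St - {pi0 Z}. J P y * W (card y)) \<le> W (card P)"
proof -
  define c where "c = card P"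
  have cN: "c < Suc n" unfolding c_def using st_card_less[OF finZ P[unfolded St_def] ne] cardZ by simp
  have Tpos: "T P > 0" using T_pos[OF P ne] .
  have "(\<Sum>y\<in>St - {pi0 Z}. J P y * W (card y)) \<le> (\<Sum>y\<in>St. J P y * W (card y))"
    using finSt J_nn W_nn by (intro sum_mono2) auto
  also have "(\<Sum>y\<in>St. J P y * W (card y)) = (\<Sum>y\<in>St. ARG_rate \<rho> P y * W (card y)) / T P"
    unfolding J_def jump_prob_def T_def[symmetric] by (simp add: sum_divide_distrib)
  also have "(\<Sum>y\<in>St. ARG_rate \<rho> P y * W (card y)) =
      (\<Sum>y\<in>{y\<in>St. card y = Suc c}. ARG_rate \<rho> P y * W (card y)) +
      (\<Sum>y\<in>{y\<in>St. card y \<noteq> Suc c}. ARG_rate \<rho> P y * W (card y))"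
    by (rule sum_split_pred[OF finSt])
  also have "(\<Sum>y\<in>{y\<in>St. card y = Suc c}. ARG_rate \<rho> P y * W (card y)) = Sp P * W (Suc c)"
    unfolding Sp_def c_def sum_distrib_right by (rule sum.cong) auto
  also have "(\<Sum>y\<in>{y\<in>St. card y \<noteq> Suc c}. ARG_rate \<rho> P y * W (card y)) \<le> Me P * W 0"
    unfolding Me_def c_def sum_distrib_right
    using rate_nn W_anti by (intro sum_mono mult_left_mono) auto
  finally have A: "(\<Sum>y\<in>St - {pi0 Z}. J P y * W (card y)) \<le> (Sp P * W (Suc c) + Me P * W 0) / T P"
    using Tpos by (simp add: divide_right_mono)
  define D where "D = (\<Sum>i<c. \<delta> i)"
  have D_nn: "D \<ge> 0" unfolding D_def using \<delta>_nn by (intro sum_nonneg) auto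
  have Wc: "W c = \<delta> c + W (Suc c)" using W_step[OF cN] .
  have W0: "W 0 = D + W c" unfolding D_def using W_0 cN by simp
  have "Me P * D \<le> Mb * D" using Me_le[OF P] D_nn by (rule mult_right_mono)
  also have "\<dots> = q ^ c - 1" unfolding D_def by (rule geo)
  finally have m1: "Me P * D \<le> q ^ c - 1" .
  have "q ^ c = xx * \<delta> c" unfolding \<delta>_def using xpos by simp
  also have "\<dots> \<le> Sp P * \<delta> c" using Sp_ge[OF P ne] \<delta>_nn unfolding xx_def by (intro mult_right_mono) auto
  finally have m2: "q ^ c \<le> Sp P * \<delta> c" .
  have key: "1 + (Sp P * W (Suc c) + Me P * W 0) \<le> T P * W c"
    unfolding T_eq W0 Wc using m1 m2 by (simp add: algebra_simps)
  have "1 / T P + (\<Sum>y\<in>St - {pi0 Z}. J P y * W (card y)) \<le> 1 / T P + (Sp P * W (Suc c) + Me P * W 0) / T P"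
    using A by simp
  also have "\<dots> = (1 + (Sp P * W (Suc c) + Me P * W 0)) / T P" by (simp add: add_divide_distrib)
  also have "\<dots> \<le> T P * W c / T P" using key Tpos by (intro divide_right_mono) auto
  also have "\<dots> = W c" using Tpos by simp
  finally show ?thesis unfolding c_def .
qed

end


lemma T_nn: "T P \<ge> 0" using T_eq Sp_nn Me_nn by simp

lemma chain_inst: "chain St J (pi0 Z)"
  by unfold_locales (auto simp: finSt[unfolded St_def] St_def pi0_st[OF finZ] J_nn J_sum[unfolded St_def])

lemma return_eq: "return_time_exp Z \<rho> =
  (\<Sum>m. \<Sum>xs\<in>Aset St (pi0 Z) m. ennreal (pp J (pi0 Z) xs * (\<Sum>y\<leftarrow>butlast xs. (\<lambda>P. 1 / T P) y)))"
  unfolding return_time_exp_def Aset_def St_def path_prob_pp J_def T_def by simp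

lemma part1: "return_time_exp Z \<rho> \<le> ennreal ((\<Sum>i<Suc n. (1 + Mb / (\<alpha> * \<rho>)) ^ i / (\<alpha> * \<rho>)))"
proof -
  interpret chain St J "pi0 Z" by (rule chain_inst)
  show ?thesis
  proof (cases "St - {pi0 Z} = {}")
    case True
    have "return_time_exp Z \<rho> \<le> ennreal (\<Sum>y\<in>St - {pi0 Z}. J (pi0 Z) y * 0)"
      unfolding return_eq
      by (rule return_bound[of "\<lambda>P. 1 / T P" "\<lambda>_. 0"]) (use T_nn True in auto)
    then show ?thesis by simp
  next
    case False
    then obtain P where P: "P \<in> St" "P \<noteq> pi0 Z" by auto
    have xpos: "xx > 0" unfolding xx_def using alpha_pos_ne[OF P] rho by simp
    have "return_time_exp Z \<rho> \<le> ennreal (\<Sum>y\<in>St - {pi0 Z}. J (pi0 Z) y * W (card y))"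
      unfolding return_eq
    proof (rule return_bound[of "\<lambda>P. 1 / T P" "\<lambda>y. W (card y)"])
      show "\<And>x. 0 \<le> 1 / T x" using T_nn by simp
      show "\<And>x. x \<in> St - {pi0 Z} \<Longrightarrow> 0 \<le> W (card x)" using W_nn[OF xpos] by simp
      show "\<And>x. x \<in> St - {pi0 Z} \<Longrightarrow> 1 / T x + (\<Sum>y\<in>St - {pi0 Z}. J x y * W (card y)) \<le> W (card x)"
        using drift[OF xpos] by auto
    qed
    also have "\<dots> \<le> ennreal (W 0)"
    proof (rule ennreal_leI)
      have "(\<Sum>y\<in>St - {pi0 Z}. J (pi0 Z) y * W (card y)) \<le> (\<Sum>y\<in>St - {pi0 Z}. J (pi0 Z) y * W 0)"
        using J_nn W_anti[OF xpos] by (intro sum_mono mult_left_mono) auto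
      also have "\<dots> \<le> (\<Sum>y\<in>St. J (pi0 Z) y * W 0)"
        using finSt J_nn W_nn[OF xpos] by (intro sum_mono2) auto
      also have "\<dots> = (\<Sum>y\<in>St. J (pi0 Z) y) * W 0" by (simp add: sum_distrib_right)
      also have "\<dots> \<le> 1 * W 0" using J_sum W_nn[OF xpos] by (intro mult_right_mono) auto
      finally show "(\<Sum>y\<in>St - {pi0 Z}. J (pi0 Z) y * W (card y)) \<le> W 0" by simp
    qed
    also have "W 0 = (\<Sum>i<Suc n. (1 + Mb / (\<alpha> * \<rho>)) ^ i / (\<alpha> * \<rho>))"
      unfolding W_def \<delta>_def q_def xx_def by (simp add: atLeast0LessThan mult.commute)
    finally show ?thesis .
  qed
qed

definition "Bset P m = {xs. length xs = Suc m \<and> set xs \<subseteq> St \<and> last xs = pi0 Z \<and>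
                        pi0 Z \<notin> set (butlast xs) \<and> P \<notin> set xs}"

lemma escape_eq: "escape_prob Z \<rho> P = (\<Sum>m. \<Sum>xs\<in>Bset P m. ennreal (pp J P xs))"
  unfolding escape_prob_def Bset_def St_def path_prob_pp J_def by simp

lemma part2:
  assumes P: "P \<in> St" and k: "k > 0" "card P + k = n + 1"
  shows "ennreal ((\<alpha> * \<rho> / (\<alpha> * \<rho> + Mb)) ^ n) \<le> escape_prob Z \<rho> P"
proof -
  have cpi: "card (pi0 Z) = Suc n" using card_pi0[OF finZ] cardZ by simp
  have ne: "P \<noteq> pi0 Z" using k cpi by auto
  have xpos: "xx > 0" unfolding xx_def using alpha_pos_ne[OF P ne] rho by simp
  define p where "p = \<rho> * \<alpha> / (\<rho> * \<alpha> + Mb)"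
  have p0: "p \<ge> 0" unfolding p_def using xpos Mb_pos unfolding xx_def by simp
  have p1: "p \<le> 1" unfolding p_def using xpos Mb_pos unfolding xx_def by simp
  have step: "\<And>y. y \<in> St \<Longrightarrow> card y < Suc n \<Longrightarrow> p \<le> (\<Sum>y'\<in>{y'\<in>St. card y' = Suc (card y)}. J y y')"
  proof -
    fix y assume y: "y \<in> St" "card y < Suc n"
    then have "y \<noteq> pi0 Z" using cpi by auto
    then show "p \<le> (\<Sum>y'\<in>{y'\<in>St. card y' = Suc (card y)}. J y y')"
      unfolding p_def using J_split[OF y(1)] by simp
  qed
  have low: "p ^ k \<le> (\<Sum>xs\<in>Dset St card k P. pp J P xs)"
    using up_lower[of St J p card "Suc n", OF finSt J_nn p0 step P] k by simp
  have sub: "Dset St card k P \<subseteq> Bset P (k - 1)"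
  proof
    fix xs assume "xs \<in> Dset St card k P"
    then have l: "length xs = k" and u: "up St card P xs" unfolding Dset_def by auto
    have xsne: "xs \<noteq> []" using l k by auto
    have setxs: "set xs \<subseteq> St" using up_set[OF u] by auto
    have "card P + length xs \<le> card (last xs)" using up_last[OF u xsne] .
    moreover have "last xs \<in> St" using setxs xsne by auto
    then have "card (last xs) \<le> Suc n" using st_card_le[OF finZ] cardZ unfolding St_def by metis
    ultimately have cl: "card (last xs) = Suc n" using l k by simp
    have last: "last xs = pi0 Z"
      using st_card_eq[OF finZ] \<open>last xs \<in> St\<close> cl cardZ unfolding St_def by metis
    have "pi0 Z \<notin> set (butlast xs)"
    proof
      assume "pi0 Z \<in> set (butlast xs)"
      then have "card (pi0 Z) < card (last xs)" using up_butlast[OF u] by blast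
      then show False using cl cpi by simp
    qed
    moreover have "P \<notin> set xs" using up_set[OF u] by blast
    ultimately show "xs \<in> Bset P (k - 1)" unfolding Bset_def using l k setxs last by auto
  qed
  have Bfin: "finite (Bset P m)" for m
    unfolding Bset_def by (rule finite_subset[OF _ finite_lists_St[OF finSt, of "Suc m"]]) auto
  have ppnn: "\<And>xs. pp J P xs \<ge> 0" by (rule pp_nonneg) (rule J_nn)
  have "ennreal ((\<alpha> * \<rho> / (\<alpha> * \<rho> + Mb)) ^ n) = ennreal (p ^ n)" unfolding p_def by (simp add: mult.commute)
  also have "\<dots> \<le> ennreal (p ^ k)"
  proof -
    have "z 0 \<in> Z" unfolding Z_def by simp
    then obtain B where "B \<in> P" using st_cover[OF finZ P[unfolded St_def]] by blast
    then have "card P \<noteq> 0" using st_fin[OF finZ P[unfolded St_def]] by auto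
    then have "k \<le> n" using k by simp
    then show ?thesis using p0 p1 by (intro ennreal_leI power_decreasing) auto
  qed
  also have "\<dots> \<le> ennreal (\<Sum>xs\<in>Dset St card k P. pp J P xs)" using low by (rule ennreal_leI)
  also have "\<dots> = (\<Sum>xs\<in>Dset St card k P. ennreal (pp J P xs))" using ppnn by (simp add: sum_ennreal)
  also have "\<dots> \<le> (\<Sum>xs\<in>Bset P (k - 1). ennreal (pp J P xs))"
    using sub Bfin by (intro sum_mono2) auto
  also have "\<dots> \<le> (\<Sum>m<Suc (k - 1). \<Sum>xs\<in>Bset P m. ennreal (pp J P xs))"
    by (intro member_le_sum) auto
  also have "\<dots> \<le> (\<Sum>m. \<Sum>xs\<in>Bset P m. ennreal (pp J P xs))"
    unfolding suminf_eq_SUP by (rule SUP_upper) simp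
  also have "\<dots> = escape_prob Z \<rho> P" using escape_eq by simp
  finally show ?thesis .
qed

end


theorem lemma5:
  fixes n :: nat
  shows "\<exists>g h :: real \<Rightarrow> real. (g \<longlongrightarrow> 0) at_top \<and> (h \<longlongrightarrow> 1) at_top \<and>
    (\<forall>(z :: nat \<Rightarrow> real) (\<rho> :: real). inj_on z {0..n} \<and> \<rho> > 0 \<longrightarrow>
       (let Z = z ` {0..n};
            \<alpha> = Min {\<bar>z i - z j\<bar> | i j. i \<le> n \<and> j \<le> n \<and> i \<noteq> j}
        in return_time_exp Z \<rho> \<le> ennreal (g (\<alpha> * \<rho>)) \<and>
           (\<forall>k>0. \<forall>P. P \<in> ARG_states Z \<and> card P + k = n + 1 \<longrightarrow>
              ennreal (h (\<alpha> * \<rho>)) \<le> escape_prob Z \<rho> P)))"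
proof (rule exI[of _ "\<lambda>x. \<Sum>i<Suc n. (1 + Mbn n / x) ^ i / x"],
       rule exI[of _ "\<lambda>x. (x / (x + Mbn n)) ^ n"], intro conjI allI impI)
  show "((\<lambda>x. \<Sum>i<Suc n. (1 + Mbn n / x) ^ i / x) \<longlongrightarrow> 0) at_top" by (rule lim_g)
  show "((\<lambda>x. (x / (x + Mbn n)) ^ n) \<longlongrightarrow> 1) at_top" by (rule lim_h)
  fix z :: "nat \<Rightarrow> real" and \<rho> :: real
  assume a: "inj_on z {0..n} \<and> \<rho> > 0"
  interpret argsetup z n \<rho> using a by unfold_locales auto
  have p1: "return_time_exp (z ` {0..n}) \<rho> \<le>
      ennreal (\<Sum>i<Suc n. (1 + Mbn n / (Min {\<bar>z i - z j\<bar> | i j. i \<le> n \<and> j \<le> n \<and> i \<noteq> j} * \<rho>)) ^ i /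
         (Min {\<bar>z i - z j\<bar> | i j. i \<le> n \<and> j \<le> n \<and> i \<noteq> j} * \<rho>))"
    using part1 unfolding Z_def \<alpha>_def Mb_def .
  have p2: "ennreal ((Min {\<bar>z i - z j\<bar> | i j. i \<le> n \<and> j \<le> n \<and> i \<noteq> j} * \<rho> /
        (Min {\<bar>z i - z j\<bar> | i j. i \<le> n \<and> j \<le> n \<and> i \<noteq> j} * \<rho> + Mbn n)) ^ n)
      \<le> escape_prob (z ` {0..n}) \<rho> P"
    if "P \<in> ARG_states (z ` {0..n})" "k > 0" "card P + k = n + 1" for k P
    using part2[of P k] that unfolding Z_def \<alpha>_def Mb_def St_def by blast
  show "let Z = z ` {0..n};
            \<alpha> = Min {\<bar>z i - z j\<bar> | i j. i \<le> n \<and> j \<le> n \<and> i \<noteq> j}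
        in return_time_exp Z \<rho> \<le> ennreal ((\<lambda>x. \<Sum>i<Suc n. (1 + Mbn n / x) ^ i / x) (\<alpha> * \<rho>)) \<and>
           (\<forall>k>0. \<forall>P. P \<in> ARG_states Z \<and> card P + k = n + 1 \<longrightarrow>
              ennreal ((\<lambda>x. (x / (x + Mbn n)) ^ n) (\<alpha> * \<rho>)) \<le> escape_prob Z \<rho> P)"
    unfolding Let_def using p1 p2 by auto
qed

end
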